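(* Let $0<|q|<1$ and let $U_x,U_y\subseteq\mathbb{C}$ be $q$-open. The left diagonal holomorphic $q$-complex $0\to\mathcal{O}(U_x\times U_x)[[y]]\xrightarrow{d_y^0}\mathcal{O}(U_x\times U_x)[[y]]^{\oplus2}\xrightarrow{d_y^1}\mathcal{O}(U_x\times U_x)[[y]]\xrightarrow{\pi_y}\mathcal{O}(U_x)\to0$ and the right diagonal holomorphic $q$-complex $0\to[[x]]\mathcal{O}(U_y\times U_y)\xrightarrow{d_x^0}([[x]]\mathcal{O}(U_y\times U_y))^{\oplus2}\xrightarrow{d_x^1}[[x]]\mathcal{O}(U_y\times U_y)\xrightarrow{\pi_x}\mathcal{O}(U_y)\to0$ are exact.
   Context: $V\subseteq\mathbb{C}$ is $q$-open if open, $0\in V$, $qV\subseteq V$. $\mathcal{O}(U_x\times U_x)[[y]]$ is the Fréchet space of formal series $f=\sum_{n\ge0}f_n(x_1,x_2)y^n$ with $f_n$ holomorphic on $U_x\times U_x$ (product topology). Operators: $N_yf=\sum_{n\ge1}f_{n-1}y^n$, $D_{y,q}f=\sum_nq^nf_ny^n$, $x_i$ = multiplication by the coordinate $x_i$ on coefficients. $d_y^0f=(N_yf,\ (x_2-qx_1D_{y,q})f)$, $d_y^1(f,g)=(x_2-x_1D_{y,q})f-N_yg$, $\pi_y(\sum_nh_ny^n)=h_0(x,x)$. Symmetrically $[[x]]\mathcal{O}(U_y\times U_y)$ consists of $f=\sum_nx^nf_n(y_1,y_2)$, $f_n\in\mathcal{O}(U_y\times U_y)$, with $N_xf=\sum_{n\ge1}x^nf_{n-1}$,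 $D_{x,q}f=\sum_nx^nq^nf_n$, $d_x^0f=((y_1-qy_2D_{x,q})f,\ N_xf)$, $d_x^1(f,g)=N_xf+(y_2D_{x,q}-y_1)g$, $\pi_x(\sum_nx^nh_n)=h_0(y,y)$. *)

theory Defs
  imports "HOL-Analysis.Analysis"
begin

definition q_open :: "complex \<Rightarrow> complex set \<Rightarrow> bool" where
  "q_open q V \<longleftrightarrow> open V \<and> 0 \<in> V \<and> ((\<lambda>z. q * z) ` V \<subseteq> V)"

definition holo2 :: "complex set \<Rightarrow> (complex \<times> complex \<Rightarrow> complex) \<Rightarrow> bool" where
  "holo2 U f \<longleftrightarrow> (\<forall>z\<in>U \<times> U. \<exists>a b. (f has_derivative (\<lambda>h. a * fst h + b * snd h)) (at z))"

text \<open>Formal power series in one variable whose n-th coefficient is a function of two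
  complex variables; the element of O(U x U)[[t]] is the coefficient sequence.\<close>
type_synonym fser = "nat \<Rightarrow> complex \<times> complex \<Rightarrow> complex"

definition ser_space :: "complex set \<Rightarrow> fser set" where
  "ser_space U = {f. \<forall>n. holo2 U (f n)}"

definition ser_eq :: "complex set \<Rightarrow> fser \<Rightarrow> fser \<Rightarrow> bool" where
  "ser_eq U f g \<longleftrightarrow> (\<forall>n. \<forall>z\<in>U \<times> U. f n z = g n z)"

definition ser_zero :: fser where "ser_zero = (\<lambda>n z. 0)"

definition Nser :: "fser \<Rightarrow> fser" where
  "Nser f = (\<lambda>n z. if n = 0 then 0 else f (n - 1) z)"

definition Dser :: "complex \<Rightarrow> fser \<Rightarrow> fser" where
  "Dser q f = (\<lambda>n z. q ^ n * f n z)"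

text \<open>Left complex (series in y, coefficients in (x1,x2) = (fst z, snd z)).\<close>
definition dy0 :: "complex \<Rightarrow> fser \<Rightarrow> fser \<times> fser" where
  "dy0 q f = (Nser f, (\<lambda>n z. snd z * f n z - q * (fst z * Dser q f n z)))"

definition dy1 :: "complex \<Rightarrow> fser \<times> fser \<Rightarrow> fser" where
  "dy1 q fg = (\<lambda>n z. (snd z * fst fg n z - fst z * Dser q (fst fg) n z) - Nser (snd fg) n z)"

definition piy :: "fser \<Rightarrow> complex \<Rightarrow> complex" where
  "piy f = (\<lambda>x. f 0 (x, x))"

text \<open>Right complex (series in x, coefficients in (y1,y2) = (fst z, snd z)).\<close>
definition dx0 :: "complex \<Rightarrow> fser \<Rightarrow> fser \<times> fser" where
  "dx0 q f = ((\<lambda>n z. fst z * f n z - q * (snd z * Dser q f n z)), Nser f)"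

definition dx1 :: "complex \<Rightarrow> fser \<times> fser \<Rightarrow> fser" where
  "dx1 q fg = (\<lambda>n z. Nser (fst fg) n z + (snd z * Dser q (snd fg) n z - fst z * snd fg n z))"

definition pix :: "fser \<Rightarrow> complex \<Rightarrow> complex" where
  "pix f = (\<lambda>y. f 0 (y, y))"

definition exact_complex ::
  "complex set \<Rightarrow> (fser \<Rightarrow> fser \<times> fser) \<Rightarrow> (fser \<times> fser \<Rightarrow> fser) \<Rightarrow> (fser \<Rightarrow> complex \<Rightarrow> complex) \<Rightarrow> bool"
where
  "exact_complex U d0 d1 pr \<longleftrightarrow>
     (\<forall>f\<in>ser_space U. ser_eq U (fst (d0 f)) ser_zero \<and> ser_eq U (snd (d0 f)) ser_zero
          \<longrightarrow> ser_eq U f ser_zero) \<and>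
     (\<forall>f\<in>ser_space U. \<forall>g\<in>ser_space U.
          ser_eq U (d1 (f, g)) ser_zero \<longleftrightarrow>
          (\<exists>h\<in>ser_space U. ser_eq U (fst (d0 h)) f \<and> ser_eq U (snd (d0 h)) g)) \<and>
     (\<forall>f\<in>ser_space U.
          (\<forall>x\<in>U. pr f x = 0) \<longleftrightarrow>
          (\<exists>g\<in>ser_space U. \<exists>h\<in>ser_space U. ser_eq U (d1 (g, h)) f)) \<and>
     (\<forall>h. h holomorphic_on U \<longrightarrow> (\<exists>f\<in>ser_space U. \<forall>x\<in>U. pr f x = h x))"

end

theory Submission
  imports Defs "HOL-Complex_Analysis.Complex_Analysis"
begin

lemma taylor_est:
  fixes g :: "complex \<times> complex \<Rightarrow> complex"
  assumes R: "0 < R"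
    and hol1: "(\<lambda>w. g(x1,w)) holomorphic_on cball b R"
    and hola: "(\<lambda>w. g(a,w)) holomorphic_on cball b R"
    and x2: "norm (x2 - b) \<le> R/2"
    and eta: "\<And>w. norm (w - b) = R \<Longrightarrow> norm (g(x1,w) - g(a,w)) \<le> \<eta>"
    and M: "\<And>w. norm (w - b) = R \<Longrightarrow> norm (g(a,w)) \<le> M"
    and eta0: "0 \<le> \<eta>" and M0: "0 \<le> M"
  shows "norm (g(x1,x2) - g(x1,b) - deriv (\<lambda>w. g(a,w)) b * (x2 - b))
          \<le> norm (x2 - b) * (2*\<eta>/R + 2*M*norm(x2-b)/R^2)"
proof -
  define B where "B = deriv (\<lambda>w. g(a,w)) b"
  have x2R: "norm (x2 - b) < R" using x2 R by linarith
  have I1: "((\<lambda>w. g(x1,w)/(w-x2)) has_contour_integral (2 * of_real pi * \<i> * g(x1,x2))) (circlepath b R)"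
    using Cauchy_integral_circlepath_simple[OF hol1, of x2] x2R by simp
  have I2: "((\<lambda>w. g(x1,w)/(w-b)) has_contour_integral (2 * of_real pi * \<i> * g(x1,b))) (circlepath b R)"
    using Cauchy_integral_circlepath_simple[OF hol1, of b] R by simp
  have I3: "((\<lambda>w. g(a,w)/(w-b)^2) has_contour_integral (2 * of_real pi * \<i> * B)) (circlepath b R)"
    using Cauchy_has_contour_integral_higher_derivative_circlepath[OF
        holomorphic_on_imp_continuous_on[OF hola] holomorphic_on_subset[OF hola], of b 1] R
    by (auto simp: B_def power2_eq_square)
  have I: "((\<lambda>w. g(x1,w)/(w-x2) - g(x1,w)/(w-b) - (x2-b) * (g(a,w)/(w-b)^2)) has_contour_integral
       (2 * of_real pi * \<i> * (g(x1,x2) - g(x1,b) - B * (x2 - b)))) (circlepath b R)"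
  proof -
    have "((\<lambda>w. g(x1,w)/(w-x2) - g(x1,w)/(w-b) - (x2-b) * (g(a,w)/(w-b)^2)) has_contour_integral
       (2 * of_real pi * \<i> * g(x1,x2) - 2 * of_real pi * \<i> * g(x1,b) - (x2-b) * (2 * of_real pi * \<i> * B))) (circlepath b R)"
      by (intro has_contour_integral_diff has_contour_integral_lmul I1 I2 I3)
    then show ?thesis by (simp add: algebra_simps)
  qed
  define K where "K = norm (x2 - b) * (2*\<eta>/R^2 + 2*M*norm(x2-b)/R^3)"
  have bnd: "norm (g(x1,w)/(w-x2) - g(x1,w)/(w-b) - (x2-b) * (g(a,w)/(w-b)^2)) \<le> K"
    if w: "norm (w - b) = R" for w
  proof -
    have wb: "w - b \<noteq> 0" using w R by auto
    have wx: "norm (w - x2) \<ge> R/2"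
      using norm_triangle_ineq2[of "w - b" "x2 - b"] w x2 by (simp add: algebra_simps)
    hence wx0: "w - x2 \<noteq> 0" using R by auto
    define D where "D = g(x1,w) - g(a,w)"
    have eq: "g(x1,w)/(w-x2) - g(x1,w)/(w-b) - (x2-b) * (g(a,w)/(w-b)^2)
       = (x2-b) * (D/((w-x2)*(w-b)) + g(a,w)*(x2-b)/((w-x2)*(w-b)^2))"
    proof -
      have gen: "G / p - G / s - (s - p) * (H / s^2) = (s - p) * ((G - H) / (p * s) + H * (s - p) / (p * s^2))"
        if "p \<noteq> 0" "s \<noteq> 0" for G H p s :: complex
        using that by (simp add: field_simps power2_eq_square)
      show ?thesis using gen[OF wx0 wb, of "g(x1,w)" "g(a,w)"] unfolding D_def by simp
    qed
    have n1: "norm (D/((w-x2)*(w-b))) \<le> \<eta>/((R/2)*R)"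
      unfolding norm_divide norm_mult
      by (rule frac_le) (use eta[OF w] eta0 R wx w in \<open>auto simp: D_def intro!: mult_mono\<close>)
    have n2: "norm (g(a,w)*(x2-b)/((w-x2)*(w-b)^2)) \<le> M*norm(x2-b)/((R/2)*R^2)"
      unfolding norm_divide norm_mult norm_power
      by (rule frac_le) (use M[OF w] M0 R wx w in \<open>auto intro!: mult_mono\<close>)
    have "norm (g(x1,w)/(w-x2) - g(x1,w)/(w-b) - (x2-b) * (g(a,w)/(w-b)^2))
        \<le> norm (x2 - b) * (\<eta>/((R/2)*R) + M*norm(x2-b)/((R/2)*R^2))"
      unfolding eq norm_mult
      by (intro mult_left_mono order_trans[OF norm_triangle_ineq] add_mono n1 n2) auto
    also have "\<dots> = K" unfolding K_def using R by (simp add: field_simps power2_eq_square power3_eq_cube)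
    finally show ?thesis .
  qed
  have K0: "0 \<le> K" unfolding K_def using eta0 M0 R by auto
  have "norm (2 * of_real pi * \<i> * (g(x1,x2) - g(x1,b) - B * (x2 - b))) \<le> K * (2*pi*R)"
    by (rule has_contour_integral_bound_circlepath[OF I K0 R]) (use bnd in auto)
  hence "2*pi * norm (g(x1,x2) - g(x1,b) - B * (x2 - b)) \<le> 2*pi * (K*R)"
    by (simp add: norm_mult)
  hence "norm (g(x1,x2) - g(x1,b) - B * (x2 - b)) \<le> K*R" by simp
  also have "K*R = norm (x2 - b) * (2*\<eta>/R + 2*M*norm(x2-b)/R^2)"
    unfolding K_def using R by (simp add: field_simps power2_eq_square power3_eq_cube)
  finally show ?thesis by (simp add: B_def mult.commute)
qed

lemma osgood:
  fixes g :: "complex \<times> complex \<Rightarrow> complex"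
  assumes r: "0 < r" and R: "0 < R"
    and hol: "\<And>x1. x1 \<in> cball a r \<Longrightarrow> (\<lambda>w. g(x1,w)) holomorphic_on cball b R"
    and cont: "continuous_on (cball a r \<times> sphere b R) g"
    and dA: "((\<lambda>x. g(x,b)) has_field_derivative A) (at a)"
  shows "\<exists>B. (g has_derivative (\<lambda>h. A * fst h + B * snd h)) (at (a,b))"
proof -
  define B where "B = deriv (\<lambda>w. g(a,w)) b"
  have cpt: "compact (cball a r \<times> sphere b R)" by (intro compact_Times) auto
  obtain M0 where M0: "\<And>z. z \<in> cball a r \<times> sphere b R \<Longrightarrow> norm (g z) \<le> M0"
    using compact_imp_bounded[OF compact_continuous_image[OF cont cpt]]
    unfolding bounded_iff by auto
  define M where "M = max M0 1"
  have Mpos: "0 < M" unfolding M_def by simp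
  have Mb: "norm (g(a,w)) \<le> M" if "norm (w - b) = R" for w
    using M0[of "(a,w)"] that r unfolding M_def by (auto simp: dist_norm norm_minus_commute)
  have uc: "uniformly_continuous_on (cball a r \<times> sphere b R) g"
    by (rule compact_uniformly_continuous[OF cont cpt])
  have bl: "bounded_linear (\<lambda>h::complex\<times>complex. A * fst h + B * snd h)"
    by (intro bounded_linear_add bounded_linear_mult_right[THEN bounded_linear_compose]
        bounded_linear_fst bounded_linear_snd)
  show ?thesis
  proof (intro exI[of _ B], unfold has_derivative_at_alt, intro conjI bl allI impI)
    fix e :: real assume e: "0 < e"
    obtain dA where dA0: "0 < dA" and dAb: "\<And>y. norm (y - a) < dA \<Longrightarrow>
         norm (g(y,b) - g(a,b) - A * (y - a)) \<le> e/2 * norm (y - a)"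
      using dA[unfolded has_field_derivative_def has_derivative_at_alt] e
      by (metis half_gt_zero mult.commute)
    obtain du where du0: "0 < du" and dub: "\<And>x x'. x \<in> cball a r \<times> sphere b R \<Longrightarrow>
         x' \<in> cball a r \<times> sphere b R \<Longrightarrow> dist x' x < du \<Longrightarrow> dist (g x') (g x) < e*R/8"
      using uc[unfolded uniformly_continuous_on_def, rule_format, of "e*R/8"] e R by auto
    define d where "d = min (min r (R/2)) (min (min dA du) (e*R^2/(8*M)))"
    have d0: "0 < d" unfolding d_def using r R dA0 du0 e Mpos by auto
    show "\<exists>d>0. \<forall>y. norm (y - (a, b)) < d \<longrightarrow>
       norm (g y - g (a, b) - (A * fst (y - (a, b)) + B * snd (y - (a, b)))) \<le> e * norm (y - (a, b))"
    proof (intro exI[of _ d] conjI d0 allI impI)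
      fix y assume y: "norm (y - (a, b)) < d"
      obtain x1 x2 where yx: "y = (x1, x2)" by (cases y)
      have n1: "norm (x1 - a) \<le> norm (y - (a,b))" using norm_fst_le[of "x1 - a" "x2 - b"] yx by simp
      have n2: "norm (x2 - b) \<le> norm (y - (a,b))" using norm_snd_le[of "x2 - b" "x1 - a"] yx by simp
      have x1d: "norm (x1 - a) < d" using n1 y by linarith
      have x2d: "norm (x2 - b) < d" using n2 y by linarith
      have x1c: "x1 \<in> cball a r" using x1d unfolding d_def by (auto simp: dist_norm norm_minus_commute)
      have eta: "norm (g(x1,w) - g(a,w)) \<le> e*R/8" if w: "norm (w - b) = R" for w
      proof -
        have "dist (g (x1,w)) (g (a,w)) < e*R/8"
          by (rule dub) (use x1c w r x1d in \<open>auto simp: dist_norm norm_minus_commute dist_Pair_Pair d_def\<close>)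
        thus ?thesis by (simp add: dist_norm)
      qed
      have T: "norm (g(x1,x2) - g(x1,b) - B * (x2 - b))
          \<le> norm (x2 - b) * (2*(e*R/8)/R + 2*M*norm(x2-b)/R^2)"
        unfolding B_def
        by (rule taylor_est[OF R hol[OF x1c] hol]) (use x2d eta Mb e R Mpos r in \<open>auto simp: d_def\<close>)
      have "2*M*norm(x2-b)/R^2 \<le> 2*M*(e*R^2/(8*M))/R^2"
        using x2d Mpos R unfolding d_def by (intro divide_right_mono mult_left_mono) auto
      also have "\<dots> = e/4" using Mpos R by (simp add: field_simps)
      finally have "2*(e*R/8)/R + 2*M*norm(x2-b)/R^2 \<le> e/2" using R by (simp add: field_simps)
      hence T2: "norm (g(x1,x2) - g(x1,b) - B * (x2 - b)) \<le> e/2 * norm (x2 - b)"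
        using T by (smt (verit) mult.commute mult_left_mono norm_ge_zero)
      have S: "norm (g(x1,b) - g(a,b) - A * (x1 - a)) \<le> e/2 * norm (x1 - a)"
        using dAb x1d unfolding d_def by auto
      have "g y - g (a, b) - (A * fst (y - (a, b)) + B * snd (y - (a, b)))
          = (g(x1,x2) - g(x1,b) - B * (x2 - b)) + (g(x1,b) - g(a,b) - A * (x1 - a))"
        unfolding yx by (simp add: algebra_simps)
      hence "norm (g y - g (a, b) - (A * fst (y - (a, b)) + B * snd (y - (a, b))))
          \<le> e/2 * norm (x2 - b) + e/2 * norm (x1 - a)"
        unfolding \<open>g y - g (a, b) - (A * fst (y - (a, b)) + B * snd (y - (a, b))) = _\<close>
        using norm_triangle_ineq[of "g(x1,x2) - g(x1,b) - B * (x2 - b)" "g(x1,b) - g(a,b) - A * (x1 - a)"] T2 S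
        by linarith
      also have "\<dots> \<le> e/2 * norm (y - (a,b)) + e/2 * norm (y - (a,b))"
        using n1 n2 e by (intro add_mono mult_left_mono) auto
      finally show "norm (g y - g (a, b) - (A * fst (y - (a, b)) + B * snd (y - (a, b)))) \<le> e * norm (y - (a, b))"
        by simp
    qed
  qed
qed


lemma partial2:
  fixes f :: "complex \<times> complex \<Rightarrow> complex"
  assumes "(f has_derivative (\<lambda>h. al * fst h + be * snd h)) (at (x1, w))"
  shows "((\<lambda>w. f (x1, w)) has_field_derivative be) (at w)"
proof -
  have "((\<lambda>w. (x1, w)) has_derivative (\<lambda>h. (0, h))) (at w)"
    by (auto intro!: derivative_eq_intros)
  from has_derivative_compose[OF this assms]
  show ?thesis unfolding has_field_derivative_def by (simp add: o_def)
qed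

lemma partial1:
  fixes f :: "complex \<times> complex \<Rightarrow> complex"
  assumes "(f has_derivative (\<lambda>h. al * fst h + be * snd h)) (at (x, x2))"
  shows "((\<lambda>x. f (x, x2)) has_field_derivative al) (at x)"
proof -
  have "((\<lambda>x. (x, x2)) has_derivative (\<lambda>h. (h, 0))) (at x)"
    by (auto intro!: derivative_eq_intros)
  from has_derivative_compose[OF this assms]
  show ?thesis unfolding has_field_derivative_def by (simp add: o_def)
qed

lemma diag_deriv:
  fixes f :: "complex \<times> complex \<Rightarrow> complex"
  assumes "(f has_derivative (\<lambda>h. al * fst h + be * snd h)) (at (x, x))"
    and U: "open U" "x \<in> U" and z: "\<And>y. y \<in> U \<Longrightarrow> f (y, y) = 0"
  shows "al + be = 0"
proof -
  have "((\<lambda>x. (x, x)) has_derivative (\<lambda>h. (h, h))) (at x)"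
    by (auto intro!: derivative_eq_intros)
  note c = has_derivative_compose[OF this assms(1)]
  have e: "(\<lambda>h. al * fst h + be * snd h) \<circ> (\<lambda>h. (h, h)) = (*) (al + be)"
    by (auto simp: fun_eq_iff algebra_simps)
  have "((\<lambda>x. f (x, x)) has_derivative (\<lambda>x. al * x + be * x)) (at x)"
    using c by (simp add: o_def)
  hence "((\<lambda>x. f (x, x)) has_derivative (*) (al + be)) (at x)"
    by (rule has_derivative_eq_rhs) (auto simp: fun_eq_iff algebra_simps)
  hence "((\<lambda>x. f (x, x)) has_field_derivative (al + be)) (at x)"
    unfolding has_field_derivative_def .
  hence "((\<lambda>x. 0) has_field_derivative (al + be)) (at x)"
    by (rule has_field_derivative_transform_within_open[OF _ U]) (simp add: z)
  moreover have "((\<lambda>x. 0::complex) has_field_derivative 0) (at x)" by simp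
  ultimately show ?thesis using DERIV_unique by blast
qed

lemma holo2_cont:
  fixes f :: "complex \<times> complex \<Rightarrow> complex"
  assumes "holo2 U f" shows "continuous_on (U \<times> U) f"
proof -
  have "\<forall>z\<in>U \<times> U. isCont f z"
  proof
    fix z assume "z \<in> U \<times> U"
    then obtain al be where "(f has_derivative (\<lambda>h. al * fst h + be * snd h)) (at z)"
      using assms unfolding holo2_def by blast
    thus "isCont f z" by (rule has_derivative_continuous)
  qed
  thus ?thesis by (simp add: continuous_at_imp_continuous_on)
qed

lemma holo2_hol2:
  fixes f :: "complex \<times> complex \<Rightarrow> complex"
  assumes "holo2 U f" "x1 \<in> U" "open U" shows "(\<lambda>w. f (x1, w)) holomorphic_on U"
proof -
  have "(\<lambda>w. f (x1, w)) field_differentiable at w" if "w \<in> U" for w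
  proof -
    have "(x1, w) \<in> U \<times> U" using assms(2) that by simp
    then obtain al be where "(f has_derivative (\<lambda>h. al * fst h + be * snd h)) (at (x1, w))"
      using assms(1) unfolding holo2_def by blast
    from partial2[OF this] show ?thesis unfolding field_differentiable_def by blast
  qed
  thus ?thesis using assms(3) by (simp add: holomorphic_on_open field_differentiable_def)
qed

lemma holo2_hol1:
  fixes f :: "complex \<times> complex \<Rightarrow> complex"
  assumes "holo2 U f" "x2 \<in> U" "open U" shows "(\<lambda>x. f (x, x2)) holomorphic_on U"
proof -
  have "(\<lambda>x. f (x, x2)) field_differentiable at x" if "x \<in> U" for x
  proof -
    have "(x, x2) \<in> U \<times> U" using assms(2) that by simp
    then obtain al be where "(f has_derivative (\<lambda>h. al * fst h + be * snd h)) (at (x, x2))"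
      using assms(1) unfolding holo2_def by blast
    from partial1[OF this] show ?thesis unfolding field_differentiable_def by blast
  qed
  thus ?thesis using assms(3) by (simp add: holomorphic_on_open field_differentiable_def)
qed


lemma division:
  fixes f :: "complex \<times> complex \<Rightarrow> complex"
  assumes U: "open U" and hf: "holo2 U f" and z: "\<And>x. x \<in> U \<Longrightarrow> f (x, x) = 0"
  shows "\<exists>G. holo2 U G \<and> (\<forall>z\<in>U \<times> U. (snd z - fst z) * G z = f z)"
proof -
  define G where "G z = (if fst z = snd z then deriv (\<lambda>w. f (fst z, w)) (fst z) else f z / (snd z - fst z))" for z
  have diag: "deriv (\<lambda>w. f (x, w)) x = deriv (\<lambda>v. - f (v, x)) x" if x: "x \<in> U" for x
  proof -
    obtain al be where d: "(f has_derivative (\<lambda>h. al * fst h + be * snd h)) (at (x, x))"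
      using hf x unfolding holo2_def by blast
    have "deriv (\<lambda>w. f (x, w)) x = be" by (rule DERIV_imp_deriv[OF partial2[OF d]])
    moreover have "deriv (\<lambda>v. - f (v, x)) x = - al"
      by (rule DERIV_imp_deriv) (intro derivative_intros partial1[OF d])
    moreover have "al + be = 0" by (rule diag_deriv[OF d U x z])
    moreover have "be = - al" using \<open>al + be = 0\<close> by (simp add: add_eq_0_iff)
    ultimately show ?thesis by simp
  qed
  have holy: "(\<lambda>w. G (x1, w)) holomorphic_on U" if x1: "x1 \<in> U" for x1
  proof -
    have "(\<lambda>w. if w = x1 then deriv (\<lambda>w. f (x1, w)) x1 else (f (x1, w) - f (x1, x1)) / (w - x1)) holomorphic_on U"
      by (rule pole_lemma_open[OF holo2_hol2[OF hf x1 U] U])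
    moreover have "(\<lambda>w. if w = x1 then deriv (\<lambda>w. f (x1, w)) x1 else (f (x1, w) - f (x1, x1)) / (w - x1)) = (\<lambda>w. G (x1, w))"
      using z[OF x1] by (auto simp: G_def fun_eq_iff)
    ultimately show ?thesis by simp
  qed
  have holx: "(\<lambda>x. G (x, x2)) holomorphic_on U" if x2: "x2 \<in> U" for x2
  proof -
    have h: "(\<lambda>v. - f (v, x2)) holomorphic_on U"
      using holo2_hol1[OF hf x2 U] by (intro holomorphic_intros)
    have "(\<lambda>x. if x = x2 then deriv (\<lambda>v. - f (v, x2)) x2 else (- f (x, x2) - - f (x2, x2)) / (x - x2)) holomorphic_on U"
      by (rule pole_lemma_open[OF h U])
    moreover have "(\<lambda>x. if x = x2 then deriv (\<lambda>v. - f (v, x2)) x2 else (- f (x, x2) - - f (x2, x2)) / (x - x2)) = (\<lambda>x. G (x, x2))"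
    proof
      fix x show "(if x = x2 then deriv (\<lambda>v. - f (v, x2)) x2 else (- f (x, x2) - - f (x2, x2)) / (x - x2)) = G (x, x2)"
      proof (cases "x = x2")
        case True thus ?thesis using diag[OF x2] by (simp add: G_def)
      next
        case False
        hence "x2 - x \<noteq> 0" "x - x2 \<noteq> 0" by auto
        thus ?thesis using False z[OF x2] by (simp add: G_def field_simps)
      qed
    qed
    ultimately show ?thesis by simp
  qed
  have contf: "continuous_on (U \<times> U) f" by (rule holo2_cont[OF hf])
  have "holo2 U G"
    unfolding holo2_def
  proof
    fix p assume p: "p \<in> U \<times> U"
    obtain a b where ab: "p = (a, b)" by (cases p)
    have a: "a \<in> U" and b: "b \<in> U" using p ab by auto
    obtain ea where ea: "ea > 0" "ball a ea \<subseteq> U" using U a open_contains_ball by blast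
    obtain eb where eb: "eb > 0" "ball b eb \<subseteq> U" using U b open_contains_ball by blast
    define \<delta> where "\<delta> = min (min ea eb) (if a = b then 1 else dist a b)"
    have d0: "\<delta> > 0" unfolding \<delta>_def using ea eb by auto
    define R where "R = \<delta>/2"
    define r where "r = \<delta>/4"
    have R0: "R > 0" and r0: "r > 0" using d0 by (auto simp: R_def r_def)
    have "\<delta> \<le> eb" "\<delta> \<le> ea" unfolding \<delta>_def by auto
    hence Reb: "R < eb" and rea: "r < ea" using d0 unfolding R_def r_def by auto
    have "cball b R \<subseteq> ball b eb" using Reb by (auto simp: subset_iff)
    hence cbU: "cball b R \<subseteq> U" using eb(2) by blast
    have "cball a r \<subseteq> ball a ea" using rea by (auto simp: subset_iff)
    hence caU: "cball a r \<subseteq> U" using ea(2) by blast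
    have sep: "x \<noteq> w" if "x \<in> cball a r" "w \<in> sphere b R" for x w
    proof
      assume xw: "x = w"
      have ax: "dist a x \<le> r" using that(1) by simp
      have bw: "dist b w = R" using that(2) by simp
      show False
      proof (cases "a = b")
        case True thus False using ax bw xw d0 unfolding r_def R_def by simp
      next
        case False
        hence "\<delta> \<le> dist a b" unfolding \<delta>_def by auto
        moreover have "dist a b \<le> dist a x + dist x b"
          by (rule dist_triangle)
        moreover have "dist x b = dist b w" using xw by (simp add: dist_commute)
        ultimately show False using ax bw d0 unfolding r_def R_def by linarith
      qed
    qed
    have hol: "(\<lambda>w. G (x1, w)) holomorphic_on cball b R" if "x1 \<in> cball a r" for x1
    proof -
      have "x1 \<in> U" using caU that by (rule subsetD)
      thus ?thesis by (rule holomorphic_on_subset[OF holy cbU])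
    qed
    have cont: "continuous_on (cball a r \<times> sphere b R) G"
    proof -
      have S: "cball a r \<times> sphere b R \<subseteq> U \<times> U" using caU cbU by auto
      have nz: "\<forall>z\<in>cball a r \<times> sphere b R. snd z - fst z \<noteq> 0"
      proof
        fix z assume "z \<in> cball a r \<times> sphere b R"
        hence "fst z \<in> cball a r" "snd z \<in> sphere b R" by auto
        from sep[OF this] show "snd z - fst z \<noteq> 0" by simp
      qed
      have "continuous_on (cball a r \<times> sphere b R) (\<lambda>z. f z / (snd z - fst z))"
        by (rule continuous_on_divide[OF continuous_on_subset[OF contf S] _ nz])
           (intro continuous_intros)
      moreover have "f z / (snd z - fst z) = G z" if "z \<in> cball a r \<times> sphere b R" for z
      proof -
        have "fst z \<in> cball a r" "snd z \<in> sphere b R" using that by auto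
        hence "fst z \<noteq> snd z" by (rule sep)
        thus ?thesis by (simp add: G_def)
      qed
      ultimately show ?thesis by (rule continuous_on_eq)
    qed
    obtain A where dA: "((\<lambda>x. G (x, b)) has_field_derivative A) (at a)"
    proof -
      have "\<forall>x\<in>U. \<exists>f'. ((\<lambda>x. G (x, b)) has_field_derivative f') (at x)"
        using holx[OF b] by (simp only: holomorphic_on_open[OF U])
      then obtain f' where "((\<lambda>x. G (x, b)) has_field_derivative f') (at a)" using a by blast
      thus ?thesis by (rule that)
    qed
    show "\<exists>al be. (G has_derivative (\<lambda>h. al * fst h + be * snd h)) (at p)"
    proof -
      obtain B where "(G has_derivative (\<lambda>h. A * fst h + B * snd h)) (at (a, b))"
        using osgood[where g=G and a=a and b=b and r=r and R=R, OF r0 R0 hol cont dA] by blast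
      thus ?thesis unfolding ab by (intro exI)
    qed
  qed
  moreover have "\<forall>z\<in>U \<times> U. (snd z - fst z) * G z = f z"
    using z by (auto simp: G_def)
  ultimately show ?thesis by blast
qed


lemma holo2_zero: "holo2 U (\<lambda>z. 0)"
  unfolding holo2_def by (auto intro!: exI[of _ 0])

lemma holo2_neg:
  assumes "holo2 U f" shows "holo2 U (\<lambda>z. - f z)"
  unfolding holo2_def
proof
  fix z assume "z \<in> U \<times> U"
  then obtain a b where d: "(f has_derivative (\<lambda>h. a * fst h + b * snd h)) (at z)"
    using assms unfolding holo2_def by blast
  have "((\<lambda>z. - f z) has_derivative (\<lambda>h. (-a) * fst h + (-b) * snd h)) (at z)"
    using has_derivative_minus[OF d] by (rule has_derivative_eq_rhs) (auto simp: fun_eq_iff)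
  thus "\<exists>a b. ((\<lambda>z. - f z) has_derivative (\<lambda>h. a * fst h + b * snd h)) (at z)" by blast
qed

lemma holo2_fst:
  assumes "h holomorphic_on U" "open U" shows "holo2 U (\<lambda>z. h (fst z))"
  unfolding holo2_def
proof
  fix z :: "complex \<times> complex" assume "z \<in> U \<times> U"
  hence "fst z \<in> U" by auto
  then obtain h' where "(h has_field_derivative h') (at (fst z))"
    using assms unfolding holomorphic_on_open[OF assms(2)] by blast
  hence d: "(h has_derivative (*) h') (at (fst z))" unfolding has_field_derivative_def .
  have "((\<lambda>z. h (fst z)) has_derivative (\<lambda>k. h' * fst k)) (at z)"
    using has_derivative_compose[OF has_derivative_fst[OF has_derivative_ident] d]
    by (simp add: o_def)
  hence "((\<lambda>z. h (fst z)) has_derivative (\<lambda>k. h' * fst k + 0 * snd k)) (at z)" by simp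
  thus "\<exists>a b. ((\<lambda>z. h (fst z)) has_derivative (\<lambda>k. a * fst k + b * snd k)) (at z)" by blast
qed

lemma zero_diag:
  fixes F :: "complex \<times> complex \<Rightarrow> complex"
  assumes U: "open U" and hF: "holo2 U F" and e: "\<forall>z\<in>U \<times> U. (snd z - fst z) * F z = 0"
  shows "\<forall>z\<in>U \<times> U. F z = 0"
proof
  fix z assume z: "z \<in> U \<times> U"
  show "F z = 0"
  proof (cases "fst z = snd z")
    case False
    have "(snd z - fst z) * F z = 0" using e z by blast
    moreover have "snd z - fst z \<noteq> 0" using False by simp
    ultimately show ?thesis by simp
  next
    case True
    obtain x where zx: "z = (x, x)" using True by (metis prod.collapse)
    have x: "x \<in> U" using z zx by auto
    have "continuous_on U (\<lambda>w. F (x, w))"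
      using holomorphic_on_imp_continuous_on[OF holo2_hol2[OF hF x U]] .
    hence c: "((\<lambda>w. F (x, w)) \<longlongrightarrow> F (x, x)) (at x)"
      using continuous_on_eq_continuous_at[OF U] x unfolding isCont_def by blast
    have "eventually (\<lambda>w. w \<in> U) (nhds x)" using eventually_nhds_in_open[OF U x] .
    hence "eventually (\<lambda>w. w \<noteq> x \<longrightarrow> F (x, w) = 0) (nhds x)"
    proof (rule eventually_mono)
      fix w assume w: "w \<in> U"
      have "(x, w) \<in> U \<times> U" using w x by simp
      hence "(snd (x, w) - fst (x, w)) * F (x, w) = 0" using e by blast
      thus "w \<noteq> x \<longrightarrow> F (x, w) = 0" by auto
    qed
    hence "eventually (\<lambda>w. w \<noteq> x \<longrightarrow> w \<in> UNIV \<longrightarrow> F (x, w) = 0) (nhds x)"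
      by (rule eventually_mono) blast
    hence ev: "eventually (\<lambda>w. F (x, w) = 0) (at x)"
      by (rule eventually_at_filter[THEN iffD2])
    have "((\<lambda>w. F (x, w)) \<longlongrightarrow> 0) (at x)"
      using ev by (rule tendsto_eventually)
    hence "F (x, x) = 0" using c tendsto_unique[OF at_neq_bot] by blast
    thus ?thesis using zx by simp
  qed
qed

lemma left_exact:
  assumes U: "open U"
  shows "exact_complex U (dy0 q) (dy1 q) piy"
  unfolding exact_complex_def
proof (intro conjI ballI allI impI)
  fix f assume f: "f \<in> ser_space U"
    and h: "ser_eq U (fst (dy0 q f)) ser_zero \<and> ser_eq U (snd (dy0 q f)) ser_zero"
  show "ser_eq U f ser_zero"
    unfolding ser_eq_def
  proof (intro allI ballI)
    fix n z assume "z \<in> U \<times> U"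
    thus "f n z = ser_zero n z" using h unfolding ser_eq_def dy0_def Nser_def ser_zero_def
      by (auto dest!: spec[of _ "Suc n"])
  qed
next
  fix f g assume f: "f \<in> ser_space U" and g: "g \<in> ser_space U"
  show "ser_eq U (dy1 q (f, g)) ser_zero =
       (\<exists>h\<in>ser_space U. ser_eq U (fst (dy0 q h)) f \<and> ser_eq U (snd (dy0 q h)) g)"
  proof
    assume E: "ser_eq U (dy1 q (f, g)) ser_zero"
    have f0: "\<forall>z\<in>U \<times> U. f 0 z = 0"
    proof (rule zero_diag[OF U])
      show "holo2 U (f 0)" using f by (simp add: ser_space_def)
      show "\<forall>z\<in>U \<times> U. (snd z - fst z) * f 0 z = 0"
      proof
        fix z assume z: "z \<in> U \<times> U"
        have "dy1 q (f, g) 0 z = 0" using E z unfolding ser_eq_def ser_zero_def by blast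
        thus "(snd z - fst z) * f 0 z = 0" unfolding dy1_def Nser_def Dser_def by (simp add: algebra_simps)
      qed
    qed
    show "\<exists>h\<in>ser_space U. ser_eq U (fst (dy0 q h)) f \<and> ser_eq U (snd (dy0 q h)) g"
    proof (intro bexI[of _ "\<lambda>n. f (Suc n)"] conjI)
      show "(\<lambda>n. f (Suc n)) \<in> ser_space U" using f by (simp add: ser_space_def)
      show "ser_eq U (fst (dy0 q (\<lambda>n. f (Suc n)))) f"
        unfolding ser_eq_def dy0_def Nser_def using f0 by (auto split: nat.splits)
      show "ser_eq U (snd (dy0 q (\<lambda>n. f (Suc n)))) g"
        unfolding ser_eq_def
      proof (intro allI ballI)
        fix n z assume z: "z \<in> U \<times> U"
        have "dy1 q (f, g) (Suc n) z = 0" using E z unfolding ser_eq_def ser_zero_def by auto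
        thus "snd (dy0 q (\<lambda>n. f (Suc n))) n z = g n z"
          unfolding dy1_def dy0_def Nser_def Dser_def by (simp add: algebra_simps)
      qed
    qed
  next
    assume "\<exists>h\<in>ser_space U. ser_eq U (fst (dy0 q h)) f \<and> ser_eq U (snd (dy0 q h)) g"
    then obtain h where hf: "ser_eq U (fst (dy0 q h)) f" and hg: "ser_eq U (snd (dy0 q h)) g" by blast
    have hf': "Nser h n z = f n z" if "z \<in> U \<times> U" for n z
      using hf that unfolding ser_eq_def dy0_def by (cases z) auto
    have hg': "snd z * h n z - q * (fst z * Dser q h n z) = g n z" if "z \<in> U \<times> U" for n z
      using hg that unfolding ser_eq_def dy0_def by (cases z) auto
    show "ser_eq U (dy1 q (f, g)) ser_zero"
      unfolding ser_eq_def
    proof (intro allI ballI)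
      fix n z assume z: "z \<in> U \<times> U"
      show "dy1 q (f, g) n z = ser_zero n z"
      proof (cases n)
        case 0
        have "f 0 z = 0" using hf'[OF z, of 0] by (simp add: Nser_def)
        thus ?thesis using 0 unfolding dy1_def Nser_def Dser_def ser_zero_def by simp
      next
        case (Suc m)
        have "f (Suc m) z = h m z" using hf'[OF z, of "Suc m"] by (simp add: Nser_def)
        moreover have "g m z = snd z * h m z - q * (fst z * Dser q h m z)"
          using hg'[OF z, of m] by simp
        ultimately show ?thesis using Suc unfolding dy1_def Nser_def Dser_def ser_zero_def
          by (simp add: algebra_simps)
      qed
    qed
  qed
next
  fix f assume f: "f \<in> ser_space U"
  show "(\<forall>x\<in>U. piy f x = 0) = (\<exists>g\<in>ser_space U. \<exists>h\<in>ser_space U. ser_eq U (dy1 q (g, h)) f)"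
  proof
    assume P: "\<forall>x\<in>U. piy f x = 0"
    obtain G where hG: "holo2 U G" and G: "\<forall>z\<in>U \<times> U. (snd z - fst z) * G z = f 0 z"
    proof -
      have h1: "holo2 U (f 0)" using f by (simp add: ser_space_def)
      have h2: "f 0 (x, x) = 0" if "x \<in> U" for x using P that by (simp add: piy_def)
      show ?thesis using division[OF U h1 h2] that by blast
    qed
    show "\<exists>g\<in>ser_space U. \<exists>h\<in>ser_space U. ser_eq U (dy1 q (g, h)) f"
    proof (rule bexI[of _ "\<lambda>n. if n = 0 then G else (\<lambda>z. 0)"], rule bexI[of _ "\<lambda>n z. - f (Suc n) z"])
      show "(\<lambda>n. if n = 0 then G else (\<lambda>z. 0)) \<in> ser_space U"
        using hG holo2_zero unfolding ser_space_def by auto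
      show "(\<lambda>n z. - f (Suc n) z) \<in> ser_space U"
        using f holo2_neg unfolding ser_space_def by auto
      show "ser_eq U (dy1 q (\<lambda>n. if n = 0 then G else (\<lambda>z. 0), \<lambda>n z. - f (Suc n) z)) f"
        unfolding ser_eq_def
      proof (intro allI ballI)
        fix n z assume z: "z \<in> U \<times> U"
        show "dy1 q (\<lambda>n. if n = 0 then G else (\<lambda>z. 0), \<lambda>n z. - f (Suc n) z) n z = f n z"
        proof (cases n)
          case 0
          have "(snd z - fst z) * G z = f 0 z" using G z by blast
          thus ?thesis using 0 by (simp add: dy1_def Nser_def Dser_def algebra_simps)
        next
          case (Suc m)
          thus ?thesis by (simp add: dy1_def Nser_def Dser_def)
        qed
      qed
    qed
  next
    assume "\<exists>g\<in>ser_space U. \<exists>h\<in>ser_space U. ser_eq U (dy1 q (g, h)) f"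
    then obtain g h where E: "ser_eq U (dy1 q (g, h)) f" by blast
    show "\<forall>x\<in>U. piy f x = 0"
    proof
      fix x assume "x \<in> U"
      hence "dy1 q (g, h) 0 (x, x) = f 0 (x, x)" using E unfolding ser_eq_def by auto
      thus "piy f x = 0" unfolding piy_def dy1_def Nser_def Dser_def by simp
    qed
  qed
next
  fix h :: "complex \<Rightarrow> complex" assume "h holomorphic_on U"
  show "\<exists>f\<in>ser_space U. \<forall>x\<in>U. piy f x = h x"
  proof (rule bexI[of _ "\<lambda>n z. h (fst z)"])
    show "(\<lambda>n z. h (fst z)) \<in> ser_space U"
      unfolding ser_space_def using holo2_fst[OF \<open>h holomorphic_on U\<close> U] by simp
    show "\<forall>x\<in>U. piy (\<lambda>n z. h (fst z)) x = h x" unfolding piy_def by simp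
  qed
qed

lemma right_exact:
  assumes U: "open U"
  shows "exact_complex U (dx0 q) (dx1 q) pix"
  unfolding exact_complex_def
proof (intro conjI ballI allI impI)
  fix f assume f: "f \<in> ser_space U"
    and h: "ser_eq U (fst (dx0 q f)) ser_zero \<and> ser_eq U (snd (dx0 q f)) ser_zero"
  show "ser_eq U f ser_zero"
    unfolding ser_eq_def
  proof (intro allI ballI)
    fix n z assume z: "z \<in> U \<times> U"
    have "Nser f (Suc n) z = 0" using h z unfolding ser_eq_def dx0_def ser_zero_def by (cases z) auto
    thus "f n z = ser_zero n z" by (simp add: Nser_def ser_zero_def)
  qed
next
  fix f g assume f: "f \<in> ser_space U" and g: "g \<in> ser_space U"
  show "ser_eq U (dx1 q (f, g)) ser_zero =
       (\<exists>h\<in>ser_space U. ser_eq U (fst (dx0 q h)) f \<and> ser_eq U (snd (dx0 q h)) g)"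
  proof
    assume E: "ser_eq U (dx1 q (f, g)) ser_zero"
    have E': "dx1 q (f, g) n z = 0" if "z \<in> U \<times> U" for n z
      using E that unfolding ser_eq_def ser_zero_def by blast
    have g0: "\<forall>z\<in>U \<times> U. g 0 z = 0"
    proof (rule zero_diag[OF U])
      show "holo2 U (g 0)" using g by (simp add: ser_space_def)
      show "\<forall>z\<in>U \<times> U. (snd z - fst z) * g 0 z = 0"
      proof
        fix z assume z: "z \<in> U \<times> U"
        from E'[OF z, of 0]
        show "(snd z - fst z) * g 0 z = 0" unfolding dx1_def Nser_def Dser_def by (simp add: algebra_simps)
      qed
    qed
    show "\<exists>h\<in>ser_space U. ser_eq U (fst (dx0 q h)) f \<and> ser_eq U (snd (dx0 q h)) g"
    proof (intro bexI[of _ "\<lambda>n. g (Suc n)"] conjI)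
      show "(\<lambda>n. g (Suc n)) \<in> ser_space U" using g by (simp add: ser_space_def)
      show "ser_eq U (snd (dx0 q (\<lambda>n. g (Suc n)))) g"
        unfolding ser_eq_def
      proof (intro allI ballI)
        fix n z assume z: "z \<in> U \<times> U"
        show "snd (dx0 q (\<lambda>n. g (Suc n))) n z = g n z"
          using g0 z by (cases n) (auto simp: dx0_def Nser_def)
      qed
      show "ser_eq U (fst (dx0 q (\<lambda>n. g (Suc n)))) f"
        unfolding ser_eq_def
      proof (intro allI ballI)
        fix n z assume z: "z \<in> U \<times> U"
        from E'[OF z, of "Suc n"]
        show "fst (dx0 q (\<lambda>n. g (Suc n))) n z = f n z"
          unfolding dx1_def dx0_def Nser_def Dser_def by (simp add: algebra_simps)
      qed
    qed
  next
    assume "\<exists>h\<in>ser_space U. ser_eq U (fst (dx0 q h)) f \<and> ser_eq U (snd (dx0 q h)) g"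
    then obtain h where hf: "ser_eq U (fst (dx0 q h)) f" and hg: "ser_eq U (snd (dx0 q h)) g" by blast
    have hf': "fst z * h n z - q * (snd z * Dser q h n z) = f n z" if "z \<in> U \<times> U" for n z
      using hf that unfolding ser_eq_def dx0_def by (cases z) auto
    have hg': "Nser h n z = g n z" if "z \<in> U \<times> U" for n z
      using hg that unfolding ser_eq_def dx0_def by (cases z) auto
    show "ser_eq U (dx1 q (f, g)) ser_zero"
      unfolding ser_eq_def
    proof (intro allI ballI)
      fix n z assume z: "z \<in> U \<times> U"
      show "dx1 q (f, g) n z = ser_zero n z"
      proof (cases n)
        case 0
        have "g 0 z = 0" using hg'[OF z, of 0] by (simp add: Nser_def)
        thus ?thesis using 0 unfolding dx1_def Nser_def Dser_def ser_zero_def by simp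
      next
        case (Suc m)
        have "g (Suc m) z = h m z" using hg'[OF z, of "Suc m"] by (simp add: Nser_def)
        moreover have "f m z = fst z * h m z - q * (snd z * Dser q h m z)"
          using hf'[OF z, of m] by simp
        ultimately show ?thesis using Suc unfolding dx1_def Nser_def Dser_def ser_zero_def
          by (simp add: algebra_simps)
      qed
    qed
  qed
next
  fix f assume f: "f \<in> ser_space U"
  show "(\<forall>x\<in>U. pix f x = 0) = (\<exists>g\<in>ser_space U. \<exists>h\<in>ser_space U. ser_eq U (dx1 q (g, h)) f)"
  proof
    assume P: "\<forall>x\<in>U. pix f x = 0"
    obtain G where hG: "holo2 U G" and G: "\<forall>z\<in>U \<times> U. (snd z - fst z) * G z = f 0 z"
    proof -
      have h1: "holo2 U (f 0)" using f by (simp add: ser_space_def)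
      have h2: "f 0 (x, x) = 0" if "x \<in> U" for x using P that by (simp add: pix_def)
      show ?thesis using division[OF U h1 h2] that by blast
    qed
    show "\<exists>g\<in>ser_space U. \<exists>h\<in>ser_space U. ser_eq U (dx1 q (g, h)) f"
    proof (rule bexI[of _ "\<lambda>n z. f (Suc n) z"], rule bexI[of _ "\<lambda>n. if n = 0 then G else (\<lambda>z. 0)"])
      show "(\<lambda>n. if n = 0 then G else (\<lambda>z. 0)) \<in> ser_space U"
        using hG holo2_zero unfolding ser_space_def by auto
      show "(\<lambda>n z. f (Suc n) z) \<in> ser_space U"
        using f unfolding ser_space_def by auto
      show "ser_eq U (dx1 q (\<lambda>n z. f (Suc n) z, \<lambda>n. if n = 0 then G else (\<lambda>z. 0))) f"
        unfolding ser_eq_def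
      proof (intro allI ballI)
        fix n z assume z: "z \<in> U \<times> U"
        show "dx1 q (\<lambda>n z. f (Suc n) z, \<lambda>n. if n = 0 then G else (\<lambda>z. 0)) n z = f n z"
        proof (cases n)
          case 0
          have "(snd z - fst z) * G z = f 0 z" using G z by blast
          thus ?thesis using 0 by (simp add: dx1_def Nser_def Dser_def algebra_simps)
        next
          case (Suc m)
          thus ?thesis by (simp add: dx1_def Nser_def Dser_def)
        qed
      qed
    qed
  next
    assume "\<exists>g\<in>ser_space U. \<exists>h\<in>ser_space U. ser_eq U (dx1 q (g, h)) f"
    then obtain g h where E: "ser_eq U (dx1 q (g, h)) f" by blast
    show "\<forall>x\<in>U. pix f x = 0"
    proof
      fix x assume "x \<in> U"
      hence "dx1 q (g, h) 0 (x, x) = f 0 (x, x)" using E unfolding ser_eq_def by auto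
      thus "pix f x = 0" unfolding pix_def dx1_def Nser_def Dser_def by simp
    qed
  qed
next
  fix h :: "complex \<Rightarrow> complex" assume "h holomorphic_on U"
  show "\<exists>f\<in>ser_space U. \<forall>x\<in>U. pix f x = h x"
  proof (rule bexI[of _ "\<lambda>n z. h (fst z)"])
    show "(\<lambda>n z. h (fst z)) \<in> ser_space U"
      unfolding ser_space_def using holo2_fst[OF \<open>h holomorphic_on U\<close> U] by simp
    show "\<forall>x\<in>U. pix (\<lambda>n z. h (fst z)) x = h x" unfolding pix_def by simp
  qed
qed

theorem proposition5p2:
  fixes q :: complex and Ux Uy :: "complex set"
  assumes "0 < norm q" and "norm q < 1"
    and "q_open q Ux" and "q_open q Uy"
  shows "exact_complex Ux (dy0 q) (dy1 q) piy \<and> exact_complex Uy (dx0 q) (dx1 q) pix"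
  using assms(3,4) left_exact right_exact unfolding q_open_def by blast

end
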